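(* Let $G$ be a connected graph with vertices $v_1,\dots,v_n$, and let $k_1,k_2,k_3$ be nonnegative integers with $k_2\neq k_3$. Then \[ \sum_{i=1}^{n} dav(G-v_i,k_1,k_2,k_3)=(n-2-k_1-k_2-k_3)\,dav(G,k_1,k_2,k_3)+(k_1+1)\,dav(G,k_1+1,k_2,k_3)+(k_2+1)\,dav(G,k_1,k_2+1,k_3)+(k_3+1)\,dav(G,k_1,k_2,k_3+1). \]
   Context: All graphs are finite, simple and undirected. $G-v$ denotes the graph obtained from $G$ by deleting vertex $v$ and its incident edges. For a graph $F$ and nonnegative integers $k_1,k_2,k_3$, $dav(F,k_1,k_2,k_3)$ denotes the number of pairs of adjacent vertices $x$ and $y$ in $F$ such that exactly $k_1$ vertices are adjacent to both $x$ and $y$, exactly $k_2$ vertices other than $y$ are adjacent to $x$ but not to $y$, and exactly $k_3$ vertices other than $x$ are adjacent to $y$ but not to $x$. *)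

theory Defs
  imports Main
begin

definition simple_graph :: "'a set \<Rightarrow> ('a \<Rightarrow> 'a \<Rightarrow> bool) \<Rightarrow> bool" where
  "simple_graph V E \<longleftrightarrow> finite V \<and> (\<forall>x y. E x y \<longrightarrow> x \<in> V \<and> y \<in> V)
     \<and> (\<forall>x y. E x y \<longrightarrow> E y x) \<and> (\<forall>x. \<not> E x x)"

definition connected_graph :: "'a set \<Rightarrow> ('a \<Rightarrow> 'a \<Rightarrow> bool) \<Rightarrow> bool" where
  "connected_graph V E \<longleftrightarrow> V \<noteq> {} \<and> (\<forall>x\<in>V. \<forall>y\<in>V. E\<^sup>*\<^sup>* x y)"

definition del_vertex_V :: "'a set \<Rightarrow> 'a \<Rightarrow> 'a set" where
  "del_vertex_V V v = V - {v}"

definition del_vertex_E :: "('a \<Rightarrow> 'a \<Rightarrow> bool) \<Rightarrow> 'a \<Rightarrow> 'a \<Rightarrow> 'a \<Rightarrow> bool" where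
  "del_vertex_E E v = (\<lambda>x y. E x y \<and> x \<noteq> v \<and> y \<noteq> v)"

definition dav :: "'a set \<Rightarrow> ('a \<Rightarrow> 'a \<Rightarrow> bool) \<Rightarrow> nat \<Rightarrow> nat \<Rightarrow> nat \<Rightarrow> nat" where
  "dav V E k1 k2 k3 = card {(x, y). x \<in> V \<and> y \<in> V \<and> E x y
      \<and> card {z \<in> V. E z x \<and> E z y} = k1
      \<and> card {z \<in> V. z \<noteq> y \<and> E z x \<and> \<not> E z y} = k2
      \<and> card {z \<in> V. z \<noteq> x \<and> E z y \<and> \<not> E z x} = k3}"

end

theory Submission
  imports Defs
begin

lemma split_count:
  fixes W C A B :: "'a set"
  assumes fin: "finite W" and sub: "C \<subseteq> W" "A \<subseteq> W" "B \<subseteq> W"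
   and dis: "C \<inter> A = {}" "C \<inter> B = {}" "A \<inter> B = {}"
  shows "int (card {v\<in>W. card (C-{v}) = k1 \<and> card (A-{v}) = k2 \<and> card (B-{v}) = k3}) =
    (if card C = k1 \<and> card A = k2 \<and> card B = k3 then int (card W) - int k1 - int k2 - int k3 else 0)
   + (if card C = k1+1 \<and> card A = k2 \<and> card B = k3 then int k1 + 1 else 0)
   + (if card C = k1 \<and> card A = k2+1 \<and> card B = k3 then int k2 + 1 else 0)
   + (if card C = k1 \<and> card A = k2 \<and> card B = k3+1 then int k3 + 1 else 0)"
proof -
  define Q where "Q v = (card (C-{v}) = k1 \<and> card (A-{v}) = k2 \<and> card (B-{v}) = k3)" for v
  define R where "R = W - C - A - B"
  have fC: "finite C" "finite A" "finite B" "finite R" using fin sub finite_subset R_def by auto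
  have W: "W = C \<union> A \<union> B \<union> R" using sub R_def by auto
  have cW: "card W = card C + card A + card B + card R"
  proof -
    have "card (C \<union> A \<union> B \<union> R) = card (C \<union> A \<union> B) + card R"
      by (rule card_Un_disjoint) (use fC R_def in auto)
    also have "card (C \<union> A \<union> B) = card (C \<union> A) + card B"
      by (rule card_Un_disjoint) (use fC dis in auto)
    also have "card (C \<union> A) = card C + card A"
      by (rule card_Un_disjoint) (use fC dis in auto)
    finally show ?thesis using W by simp
  qed
  have split: "{v\<in>W. Q v} = ({v\<in>C. Q v} \<union> {v\<in>A. Q v}) \<union> {v\<in>B. Q v} \<union> {v\<in>R. Q v}"
    using W by auto
  have c: "card {v\<in>W. Q v} = card {v\<in>C. Q v} + card {v\<in>A. Q v} + card {v\<in>B. Q v} + card {v\<in>R. Q v}"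
  proof -
    have "card (({v\<in>C. Q v} \<union> {v\<in>A. Q v}) \<union> {v\<in>B. Q v} \<union> {v\<in>R. Q v}) = card (({v\<in>C. Q v} \<union> {v\<in>A. Q v}) \<union> {v\<in>B. Q v}) + card {v\<in>R. Q v}"
      by (rule card_Un_disjoint) (use fC R_def in auto)
    also have "card (({v\<in>C. Q v} \<union> {v\<in>A. Q v}) \<union> {v\<in>B. Q v}) = card ({v\<in>C. Q v} \<union> {v\<in>A. Q v}) + card {v\<in>B. Q v}"
      by (rule card_Un_disjoint) (use fC dis in auto)
    also have "card ({v\<in>C. Q v} \<union> {v\<in>A. Q v}) = card {v\<in>C. Q v} + card {v\<in>A. Q v}"
      by (rule card_Un_disjoint) (use fC dis in auto)
    finally show ?thesis using split by simp
  qed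
  have 1: "{v\<in>C. Q v} = (if card C = k1+1 \<and> card A = k2 \<and> card B = k3 then C else {})"
  proof -
    have "Q v = (card C = k1+1 \<and> card A = k2 \<and> card B = k3)" if "v \<in> C" for v
    proof -
      have "A - {v} = A" "B - {v} = B" using that dis by auto
      moreover have "card (C - {v}) = card C - 1" "card C \<ge> 1" using that fC
        by (auto simp: card_gt_0_iff Suc_le_eq)
      ultimately show ?thesis unfolding Q_def by (intro iffI; elim conjE; simp)
    qed
    then show ?thesis by auto
  qed
  have 2: "{v\<in>A. Q v} = (if card C = k1 \<and> card A = k2+1 \<and> card B = k3 then A else {})"
  proof -
    have "Q v = (card C = k1 \<and> card A = k2+1 \<and> card B = k3)" if "v \<in> A" for v
    proof -
      have "C - {v} = C" "B - {v} = B" using that dis by auto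
      moreover have "card (A - {v}) = card A - 1" "card A \<ge> 1" using that fC
        by (auto simp: card_gt_0_iff Suc_le_eq)
      ultimately show ?thesis unfolding Q_def by (intro iffI; elim conjE; simp)
    qed
    then show ?thesis by auto
  qed
  have 3: "{v\<in>B. Q v} = (if card C = k1 \<and> card A = k2 \<and> card B = k3+1 then B else {})"
  proof -
    have "Q v = (card C = k1 \<and> card A = k2 \<and> card B = k3+1)" if "v \<in> B" for v
    proof -
      have "C - {v} = C" "A - {v} = A" using that dis by auto
      moreover have "card (B - {v}) = card B - 1" "card B \<ge> 1" using that fC
        by (auto simp: card_gt_0_iff Suc_le_eq)
      ultimately show ?thesis unfolding Q_def by (intro iffI; elim conjE; simp)
    qed
    then show ?thesis by auto
  qed
  have 4: "{v\<in>R. Q v} = (if card C = k1 \<and> card A = k2 \<and> card B = k3 then R else {})"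
  proof -
    have "Q v = (card C = k1 \<and> card A = k2 \<and> card B = k3)" if "v \<in> R" for v
    proof -
      have "C - {v} = C" "A - {v} = A" "B - {v} = B" using that R_def by auto
      then show ?thesis unfolding Q_def by auto
    qed
    then show ?thesis by auto
  qed
  have "int (card {v\<in>W. Q v}) = int (card {v\<in>C. Q v}) + int (card {v\<in>A. Q v}) + int (card {v\<in>B. Q v}) + int (card {v\<in>R. Q v})"
    using c by simp
  also have "... = (if card C = k1 \<and> card A = k2 \<and> card B = k3 then int (card W) - int k1 - int k2 - int k3 else 0)
   + (if card C = k1+1 \<and> card A = k2 \<and> card B = k3 then int k1 + 1 else 0)
   + (if card C = k1 \<and> card A = k2+1 \<and> card B = k3 then int k2 + 1 else 0)
   + (if card C = k1 \<and> card A = k2 \<and> card B = k3+1 then int k3 + 1 else 0)"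
  proof -
    have a1: "int (card {v\<in>C. Q v}) = (if card C = k1+1 \<and> card A = k2 \<and> card B = k3 then int k1 + 1 else 0)"
      unfolding 1 by simp
    have a2: "int (card {v\<in>A. Q v}) = (if card C = k1 \<and> card A = k2+1 \<and> card B = k3 then int k2 + 1 else 0)"
      unfolding 2 by simp
    have a3: "int (card {v\<in>B. Q v}) = (if card C = k1 \<and> card A = k2 \<and> card B = k3+1 then int k3 + 1 else 0)"
      unfolding 3 by simp
    have a4: "int (card {v\<in>R. Q v}) = (if card C = k1 \<and> card A = k2 \<and> card B = k3 then int (card W) - int k1 - int k2 - int k3 else 0)"
      unfolding 4 using cW by simp
    show ?thesis unfolding a1 a2 a3 a4 by (simp only: ac_simps)
  qed
  finally show ?thesis unfolding Q_def .
qed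


lemma sum_if_const: "finite A \<Longrightarrow> (\<Sum>x\<in>A. if Q x then (m::int) else 0) = m * int (card {x\<in>A. Q x})"
  by (simp add: sum.inter_filter[symmetric])

lemma card_sum_ind: "finite A \<Longrightarrow> card {x\<in>A. Q x} = (\<Sum>x\<in>A. if Q x then 1 else 0::nat)"
  by (simp add: sum.inter_filter[symmetric])

theorem theorem16:
  fixes V :: "'a set" and E :: "'a \<Rightarrow> 'a \<Rightarrow> bool" and k1 k2 k3 :: nat
  assumes "simple_graph V E" and "connected_graph V E" and "k2 \<noteq> k3"
  shows "int (\<Sum>v\<in>V. dav (del_vertex_V V v) (del_vertex_E E v) k1 k2 k3)
    = (int (card V) - 2 - int k1 - int k2 - int k3) * int (dav V E k1 k2 k3)
      + (int k1 + 1) * int (dav V E (k1 + 1) k2 k3)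
      + (int k2 + 1) * int (dav V E k1 (k2 + 1) k3)
      + (int k3 + 1) * int (dav V E k1 k2 (k3 + 1))"
proof -
  have finV: "finite V" and inV: "\<And>x y. E x y \<Longrightarrow> x \<in> V \<and> y \<in> V"
    and symE: "\<And>x y. E x y \<Longrightarrow> E y x" and irr: "\<And>x. \<not> E x x"
    using assms(1) unfolding simple_graph_def by auto
  define cC where "cC x y = {z\<in>V. E z x \<and> E z y}" for x y
  define cA where "cA x y = {z\<in>V. z \<noteq> y \<and> E z x \<and> \<not> E z y}" for x y
  define cB where "cB x y = {z\<in>V. z \<noteq> x \<and> E z y \<and> \<not> E z x}" for x y
  define P where "P = {(x,y). x\<in>V \<and> y\<in>V \<and> E x y}"
  define T where "T v x y = (v \<noteq> x \<and> v \<noteq> y \<and> card (cC x y - {v}) = k1 \<and> card (cA x y - {v}) = k2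
     \<and> card (cB x y - {v}) = k3)" for v x y
  define n where "n = card V"
  define h where "h a b c = (if a = k1 \<and> b = k2 \<and> c = k3 then int n - 2 - int k1 - int k2 - int k3 else 0)
   + (if a = k1+1 \<and> b = k2 \<and> c = k3 then int k1 + 1 else 0)
   + (if a = k1 \<and> b = k2+1 \<and> c = k3 then int k2 + 1 else 0)
   + (if a = k1 \<and> b = k2 \<and> c = k3+1 then int k3 + 1 else 0)" for a b c
  have finP: "finite P"
  proof -
    have "P \<subseteq> V \<times> V" unfolding P_def by auto
    then show ?thesis using finV finite_subset by blast
  qed
  have step1: "dav (del_vertex_V V v) (del_vertex_E E v) k1 k2 k3 = card {p\<in>P. case p of (x,y) \<Rightarrow> T v x y}"
    if "v \<in> V" for v
  proof -
    define V' where "V' = V - {v}"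
    define E' where "E' = del_vertex_E E v"
    have E'eq: "E' x y = (E x y \<and> x \<noteq> v \<and> y \<noteq> v)" for x y unfolding E'_def del_vertex_E_def by simp
    have sC: "{z\<in>V'. E' z x \<and> E' z y} = cC x y - {v}" if "x \<noteq> v" "y \<noteq> v" for x y
      using that unfolding cC_def V'_def E'eq by auto
    have sA: "{z\<in>V'. z \<noteq> y \<and> E' z x \<and> \<not> E' z y} = cA x y - {v}" if "x \<noteq> v" "y \<noteq> v" for x y
      using that unfolding cA_def V'_def E'eq by auto
    have sB: "{z\<in>V'. z \<noteq> x \<and> E' z y \<and> \<not> E' z x} = cB x y - {v}" if "x \<noteq> v" "y \<noteq> v" for x y
      using that unfolding cB_def V'_def E'eq by auto
    have "{(x,y). x\<in>V' \<and> y\<in>V' \<and> E' x y \<and> card {z\<in>V'. E' z x \<and> E' z y} = k1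
      \<and> card {z\<in>V'. z \<noteq> y \<and> E' z x \<and> \<not> E' z y} = k2
      \<and> card {z\<in>V'. z \<noteq> x \<and> E' z y \<and> \<not> E' z x} = k3} = {p\<in>P. case p of (x,y) \<Rightarrow> T v x y}"
      (is "?L = ?R")
    proof (rule set_eqI)
      fix p :: "'a \<times> 'a"
      obtain x y where p: "p = (x,y)" by (cases p)
      show "p \<in> ?L \<longleftrightarrow> p \<in> ?R"
      proof (cases "x \<noteq> v \<and> y \<noteq> v")
        case True
        then show ?thesis using sC[of x y] sA[of x y] sB[of x y]
          by (auto simp: p P_def T_def V'_def E'eq)
      next
        case False
        then show ?thesis by (auto simp: p P_def T_def V'_def)
      qed
    qed
    then show ?thesis unfolding dav_def del_vertex_V_def V'_def[symmetric] E'_def[symmetric] by (rule arg_cong[where f=card])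
  qed
  have step2: "(\<Sum>v\<in>V. card {p\<in>P. case p of (x,y) \<Rightarrow> T v x y}) = (\<Sum>p\<in>P. card {v\<in>V. case p of (x,y) \<Rightarrow> T v x y})"
    using finV finP by (simp add: card_sum_ind sum.swap[of _ V P])
  have step3: "int (card {v\<in>V. case p of (x,y) \<Rightarrow> T v x y}) = (case p of (x,y) \<Rightarrow> h (card (cC x y)) (card (cA x y)) (card (cB x y)))"
    if "p \<in> P" for p
  proof -
    obtain x y where p: "p = (x,y)" by (cases p)
    have xy: "x \<in> V" "y \<in> V" "E x y" using that p P_def by auto
    have "x \<noteq> y" using xy irr by auto
    define W where "W = V - {x,y}"
    have c2: "card {x,y} \<le> card V" using xy finV by (intro card_mono) auto
    have cW: "int (card W) = int n - 2" unfolding W_def n_def using xy \<open>x \<noteq> y\<close> finV c2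
      by (simp add: card_Diff_subset of_nat_diff)
    have eq: "{v\<in>V. T v x y} = {v\<in>W. card (cC x y - {v}) = k1 \<and> card (cA x y - {v}) = k2 \<and> card (cB x y - {v}) = k3}"
      unfolding W_def T_def by auto
    have "int (card {v\<in>V. T v x y}) = h (card (cC x y)) (card (cA x y)) (card (cB x y))"
      unfolding eq h_def cW[symmetric]
      apply (rule split_count)
      using finV irr unfolding W_def cC_def cA_def cB_def by auto
    then show ?thesis using p by simp
  qed
  have dav_eq: "dav V E a b c = card {p\<in>P. case p of (x,y) \<Rightarrow> card (cC x y) = a \<and> card (cA x y) = b \<and> card (cB x y) = c}" for a b c
    unfolding dav_def P_def cC_def cA_def cB_def by (rule arg_cong[where f=card]) auto
  have "int (\<Sum>v\<in>V. dav (del_vertex_V V v) (del_vertex_E E v) k1 k2 k3)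
     = int (\<Sum>p\<in>P. card {v\<in>V. case p of (x,y) \<Rightarrow> T v x y})"
    using step1 step2 by simp
  also have "... = (\<Sum>p\<in>P. case p of (x,y) \<Rightarrow> h (card (cC x y)) (card (cA x y)) (card (cB x y)))"
    unfolding of_nat_sum using step3 by (rule sum.cong[OF refl])
  also have "... = (int n - 2 - int k1 - int k2 - int k3) * int (dav V E k1 k2 k3)
      + (int k1 + 1) * int (dav V E (k1 + 1) k2 k3)
      + (int k2 + 1) * int (dav V E k1 (k2 + 1) k3)
      + (int k3 + 1) * int (dav V E k1 k2 (k3 + 1))"
    unfolding h_def dav_eq split_def sum.distrib using finP by (simp only: sum_if_const)
  finally show ?thesis unfolding n_def .
qed

end
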